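(* Let $\mathcal{D}$ be the dumbbell: the non-uniform hypergraph on two vertices $u,v$ with edge set $\{\{u,v\},\{u\},\{v\}\}$. Then for every positive integer $k$, $\mathcal{E}_{\mathcal{D}}(k)=\bigl\lfloor\tfrac{3}{2}(k-1)\bigr\rfloor$, whereas $\mathcal{E}^*_{\mathcal{D}}(k)=(\phi-o(1))k$ as $k\to\infty$, where $\phi=\frac{1+\sqrt5}{2}$ is the golden ratio.
   Context: A (non-uniform) hypergraph has edges which are nonempty subsets of its vertex set of possibly different sizes; edges of size 1 are called loops. A multi-hypergraph may additionally have repeated (parallel) edges; a simple one has no repeated edges (but may contain edges $e\subsetneq f$). A copy of $H$ in $G$ is a sub(multi)hypergraph of $G$ isomorphic to $H$ (preserving edge sizes). $\operatorname{ex}(G,H)$ is the maximum number of edges in a sub(multi)hypergraph of $G$ (a sub-multiset of its edges) containing no copy of $H$. $\mathcal{E}_H(k):=\sup\{e(G): G \text{ a simple hypergraph with } \operatorname{ex}(G,H)<k\}$ and $\mathcal{E}^*_H(k):=\sup\{e(G): G\text{ a multi-hypergraph with }\operatorname{ex}(G,H)<k\}$, where $e(G)$ counts edges with multiplicity. Hypergraphs have no isolated vertices. *)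

theory Defs
  imports "HOL-Analysis.Analysis" "HOL-Library.Multiset" "HOL-Library.Extended_Nat"
begin

text \<open>A (finite) multi-hypergraph is a finite multiset of edges; each edge is a nonempty
finite set of vertices. Vertices are those covered by edges (no isolated vertices).\<close>

definition is_mhg :: "'a set multiset \<Rightarrow> bool" where
  "is_mhg G \<longleftrightarrow> (\<forall>e\<in>#G. e \<noteq> {} \<and> finite e)"

definition is_simple :: "'a set multiset \<Rightarrow> bool" where
  "is_simple G \<longleftrightarrow> (\<forall>e. count G e \<le> 1)"

definition hverts :: "'a set multiset \<Rightarrow> 'a set" where
  "hverts H = \<Union> (set_mset H)"

text \<open>G contains a copy of H: an injective vertex map sending the edge multiset of H
into a sub-multiset of G (edge sizes are preserved by injectivity).\<close>
definition has_copy :: "'a set multiset \<Rightarrow> 'b set multiset \<Rightarrow> bool" where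
  "has_copy G H \<longleftrightarrow> (\<exists>f. inj_on f (hverts H) \<and> image_mset (\<lambda>e. f ` e) H \<subseteq># G)"

definition ex :: "'a set multiset \<Rightarrow> 'b set multiset \<Rightarrow> nat" where
  "ex G H = Max (size ` {F. F \<subseteq># G \<and> \<not> has_copy F H})"

text \<open>Host hypergraphs live on vertex type nat (every finite hypergraph embeds there).
The supremum is taken in enat, so an unbounded set gives \<infinity>.\<close>
definition EH :: "'b set multiset \<Rightarrow> nat \<Rightarrow> enat" where
  "EH H k = Sup ((\<lambda>G. enat (size G)) ` {G :: nat set multiset. is_mhg G \<and> is_simple G \<and> ex G H < k})"

definition EHstar :: "'b set multiset \<Rightarrow> nat \<Rightarrow> enat" where
  "EHstar H k = Sup ((\<lambda>G. enat (size G)) ` {G :: nat set multiset. is_mhg G \<and> ex G H < k})"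

definition dumbbell :: "nat set multiset" where
  "dumbbell = {#{0,1}, {0}, {1}#}"

end

theory Submission
  imports Defs
begin


definition drop_e :: "nat set \<Rightarrow> nat set \<Rightarrow> bool" where
  "drop_e S e \<longleftrightarrow> (card e = 1 \<and> \<not> e \<subseteq> S) \<or> (card e = 2 \<and> e \<subseteq> S)"

definition keep :: "nat set \<Rightarrow> nat set multiset \<Rightarrow> nat set multiset" where
  "keep S G = filter_mset (\<lambda>e. \<not> drop_e S e) G"

lemma hverts_db: "hverts dumbbell = {0,1}"
  by (auto simp: hverts_def dumbbell_def)

lemma has_copy_db_iff:
  "has_copy F dumbbell \<longleftrightarrow> (\<exists>u v. u \<noteq> v \<and> {#{u,v},{u},{v}#} \<subseteq># F)"
proof
  assume "has_copy F dumbbell"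
  then obtain f where f: "inj_on f {0,1}" "image_mset (\<lambda>e. f ` e) dumbbell \<subseteq># F"
    by (auto simp: has_copy_def hverts_db)
  have "f 0 \<noteq> f 1" using f(1) by (auto dest: inj_onD)
  moreover have "image_mset (\<lambda>e. f ` e) dumbbell = {#{f 0, f 1},{f 0},{f 1}#}"
    by (simp add: dumbbell_def)
  ultimately show "\<exists>u v. u \<noteq> v \<and> {#{u,v},{u},{v}#} \<subseteq># F" using f(2) by metis
next
  assume "\<exists>u v. u \<noteq> v \<and> {#{u,v},{u},{v}#} \<subseteq># F"
  then obtain u v where uv: "u \<noteq> v" "{#{u,v},{u},{v}#} \<subseteq># F" by blast
  define f where "f = (\<lambda>x::nat. if x = 0 then u else v)"
  have "inj_on f {0,1}" using uv(1) by (auto simp: f_def inj_on_def)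
  moreover have "image_mset (\<lambda>e. f ` e) dumbbell = {#{u,v},{u},{v}#}"
    by (simp add: dumbbell_def f_def insert_commute)
  ultimately show "has_copy F dumbbell" unfolding has_copy_def hverts_db using uv(2)
    by (intro exI[of _ f]) simp
qed

lemma three_sub:
  assumes "a \<in># F" "b \<in># F" "c \<in># F" "a \<noteq> b" "a \<noteq> c" "b \<noteq> c"
  shows "{#a,b,c#} \<subseteq># F"
  using assms by (auto simp: subseteq_mset_def)

lemma copy_of3:
  assumes "u \<noteq> v" "{u,v} \<in># F" "{u} \<in># F" "{v} \<in># F"
  shows "has_copy F dumbbell"
proof -
  have "{u,v} \<noteq> {u}" "{u,v} \<noteq> {v}" "{u} \<noteq> {v}" using assms(1) by auto
  then show ?thesis using assms three_sub[of "{u,v}" F "{u}" "{v}"]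
    by (auto simp: has_copy_db_iff)
qed

lemma nocopy_keep: "\<not> has_copy (keep S G) dumbbell"
proof
  assume "has_copy (keep S G) dumbbell"
  then obtain u v where uv: "u \<noteq> v" "{#{u,v},{u},{v}#} \<subseteq># keep S G"
    by (auto simp: has_copy_db_iff)
  then have "{u,v} \<in># keep S G" "{u} \<in># keep S G" "{v} \<in># keep S G"
    using mset_subset_eqD[OF uv(2)] by auto
  then show False using uv(1) by (auto simp: keep_def drop_e_def)
qed

lemma finite_submsets: "finite {F. F \<subseteq># (G::'a multiset)}"
proof (induction G)
  case empty
  then show ?case by simp
next
  case (add x G)
  have "{F. F \<subseteq># add_mset x G} \<subseteq> {F. F \<subseteq># G} \<union> add_mset x ` {F. F \<subseteq># G}"
  proof
    fix F assume "F \<in> {F. F \<subseteq># add_mset x G}"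
    then have F: "F \<subseteq># add_mset x G" by simp
    have FG: "F - {#x#} \<subseteq># G" using F by (simp add: subset_eq_diff_conv)
    show "F \<in> {F. F \<subseteq># G} \<union> add_mset x ` {F. F \<subseteq># G}"
    proof (cases "x \<in># F")
      case True
      then have "F = add_mset x (F - {#x#})" by simp
      with FG show ?thesis by blast
    next
      case False
      then have "F \<subseteq># G" using FG by simp
      then show ?thesis by blast
    qed
  qed
  then show ?case using add by (meson finite_UnI finite_imageI finite_subset)
qed

lemma ex_ge:
  assumes "F \<subseteq># G" "\<not> has_copy F H"
  shows "size F \<le> ex G H"
proof -
  have "finite (size ` {F. F \<subseteq># G \<and> \<not> has_copy F H})"
    by (rule finite_imageI, rule finite_subset[OF _ finite_submsets[of G]]) auto
  then show ?thesis unfolding ex_def using assms by (intro Max_ge) auto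
qed

lemma nocopy_empty: "\<not> has_copy {#} dumbbell"
  by (auto simp: has_copy_db_iff)

lemma ex_attained:
  "\<exists>F. F \<subseteq># G \<and> \<not> has_copy F dumbbell \<and> size F = ex G dumbbell"
proof -
  have fin: "finite (size ` {F. F \<subseteq># G \<and> \<not> has_copy F dumbbell})"
    by (rule finite_imageI, rule finite_subset[OF _ finite_submsets[of G]]) auto
  have ne: "size ` {F. F \<subseteq># G \<and> \<not> has_copy F dumbbell} \<noteq> {}"
    using nocopy_empty by (auto intro!: exI[of _ "{#}"])
  show ?thesis using Max_in[OF fin ne] unfolding ex_def by auto
qed

lemma ex_ge_keep: "size (keep S G) \<le> ex G dumbbell"
  by (rule ex_ge) (auto simp: keep_def nocopy_keep[unfolded keep_def])

lemma ex_le_keep: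
  assumes "\<And>S. size (keep S G) \<le> B"
  shows "ex G dumbbell \<le> B"
proof -
  obtain F where F: "F \<subseteq># G" "\<not> has_copy F dumbbell" "size F = ex G dumbbell"
    using ex_attained by blast
  define S where "S = {v. {v} \<in># F}"
  have nd: "\<not> drop_e S e" if e: "e \<in># F" for e
  proof
    assume "drop_e S e"
    then consider "card e = 1" "\<not> e \<subseteq> S" | "card e = 2" "e \<subseteq> S"
      unfolding drop_e_def by blast
    then show False
    proof cases
      case 1
      then obtain v where "e = {v}" by (auto simp: card_Suc_eq)
      then show False using 1 e by (auto simp: S_def)
    next
      case 2
      then obtain u v where uv: "e = {u,v}" "u \<noteq> v" by (auto simp: card_2_iff)
      then have "{u} \<in># F" "{v} \<in># F" using 2 by (auto simp: S_def)
      then show False using copy_of3[OF uv(2)] uv e F(2) by auto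
    qed
  qed
  have "filter_mset (\<lambda>e. \<not> drop_e S e) F = F" using nd by (simp add: filter_mset_eq_conv)
  then have "F \<subseteq># keep S G" unfolding keep_def using multiset_filter_mono[OF F(1)] by metis
  then have "size F \<le> size (keep S G)" by (rule size_mset_mono)
  then show ?thesis using F(3) assms[of S] by simp
qed


lemma ar1: "(a::nat) \<le> a' \<Longrightarrow> b \<le> b' \<Longrightarrow> 3*(a'+b') \<le> w' + e \<Longrightarrow> w' + 1 = w \<Longrightarrow> 3*(a+b) \<le> w + e"
  by arith

lemma ar2: "(a::nat) \<le> a' + A \<Longrightarrow> b \<le> b' \<Longrightarrow> 3*(a'+b') \<le> w' + e' \<Longrightarrow> e' + 1 \<le> e \<Longrightarrow> A \<le> 1
   \<Longrightarrow> w = w' + A + 1 \<Longrightarrow> 3*(a+b) \<le> w + e"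
  by arith

lemma ar3: "(a::nat) \<le> a' + 1 \<Longrightarrow> b \<le> b' \<Longrightarrow> 3*(a'+b') \<le> w' + e' \<Longrightarrow> e' + d = e \<Longrightarrow> 2 \<le> d
   \<Longrightarrow> w' + 1 = w \<Longrightarrow> 3*(a+b) \<le> w + e"
  by arith

lemma simple_core:
  fixes W :: "nat set" and E :: "nat set set"
  assumes "finite W" "finite E" "\<forall>e\<in>E. card e = 2"
  shows "\<exists>S. 3 * (card (W - S) + card {e\<in>E. e \<subseteq> S}) \<le> card W + card E"
  using assms
proof (induction "card W" arbitrary: W E rule: less_induct)
  case less
  show ?case
  proof (cases "W = {}")
    case True
    have h: "{e\<in>E. e \<subseteq> {}} = {}" using less.prems(3) by auto
    show ?thesis
      apply (rule exI[of _ "{}"])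
      apply (subst h)
      using True by simp
  next
    case False
    then obtain v where vW: "v \<in> W" by blast
    define Ev where "Ev = {e\<in>E. v \<in> e}"
    have finEv: "finite Ev" using less.prems(2) by (simp add: Ev_def)
    have EvE: "Ev \<subseteq> E" by (auto simp: Ev_def)
    have cW: "card (W - {v}) < card W" using vW less.prems(1) by (meson card_Diff1_less)
    consider "card Ev = 0" | "card Ev = 1" | "card Ev \<ge> 2" by linarith
    then show ?thesis
    proof cases
      case 1
      then have Ev0: "Ev = {}" using finEv by simp
      obtain S' where S': "3 * (card ((W - {v}) - S') + card {e\<in>E. e \<subseteq> S'}) \<le> card (W - {v}) + card E"
        using less.hyps[OF cW] less.prems by (meson finite_Diff)
      define S where "S = insert v S'"
      have "W - S \<subseteq> (W - {v}) - S'" by (auto simp: S_def)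
      then have a: "card (W - S) \<le> card ((W - {v}) - S')"
        using less.prems(1) by (meson card_mono finite_Diff)
      have "{e\<in>E. e \<subseteq> S} \<subseteq> {e\<in>E. e \<subseteq> S'}" using Ev0 by (auto simp: S_def Ev_def)
      then have b: "card {e\<in>E. e \<subseteq> S} \<le> card {e\<in>E. e \<subseteq> S'}"
        using less.prems(2) by (simp add: card_mono)
      have cw1: "card (W - {v}) + 1 = card W" using vW less.prems(1) by (metis Suc_eq_plus1 card.remove)
      show ?thesis by (rule exI[of _ S], rule ar1[OF a b S' cw1])
    next
      case 2
      then obtain e0 where Ev1: "Ev = {e0}" by (auto simp: card_Suc_eq)
      then have e0: "e0 \<in> E" "v \<in> e0" by (auto simp: Ev_def)
      then have "card e0 = 2" using less.prems(3) by auto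
      then obtain a b where ab: "e0 = {a,b}" "a \<noteq> b" by (auto simp: card_2_iff)
      then obtain u where u: "e0 = {v,u}" "u \<noteq> v" using e0(2) by auto
      define W' where "W' = W - {v} - {u}"
      define E' where "E' = {e\<in>E. v \<notin> e \<and> u \<notin> e}"
      have cW': "card W' < card W" unfolding W'_def using cW
        by (meson Diff_subset card_mono finite_Diff less.prems(1) order_le_less_trans)
      obtain S' where S': "3 * (card (W' - S') + card {e\<in>E'. e \<subseteq> S'}) \<le> card W' + card E'"
        using less.hyps[OF cW', of E'] less.prems by (auto simp: W'_def E'_def)
      define S where "S = insert v (S' - {u})"
      define A where "A = card ({u} \<inter> W)"
      have A1: "A \<le> 1" unfolding A_def by (simp add: card_le_Suc0_iff_eq)
      have "W - S \<subseteq> (W' - S') \<union> ({u} \<inter> W)" by (auto simp: S_def W'_def)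
      then have "card (W - S) \<le> card ((W' - S') \<union> ({u} \<inter> W))"
        using less.prems(1) by (intro card_mono) (auto simp: W'_def)
      also have "\<dots> \<le> card (W' - S') + A" unfolding A_def by (rule card_Un_le)
      finally have a: "card (W - S) \<le> card (W' - S') + A" .
      have "{e\<in>E. e \<subseteq> S} \<subseteq> {e\<in>E'. e \<subseteq> S'}"
      proof
        fix e assume e: "e \<in> {e\<in>E. e \<subseteq> S}"
        have "v \<notin> e"
        proof
          assume "v \<in> e"
          then have "e \<in> Ev" using e by (auto simp: Ev_def)
          then have "e = e0" using Ev1 by auto
          then show False using e u by (auto simp: S_def)
        qed
        moreover have "u \<notin> e" using e u by (auto simp: S_def)
        ultimately show "e \<in> {e\<in>E'. e \<subseteq> S'}" using e by (auto simp: E'_def S_def)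
      qed
      then have b: "card {e\<in>E. e \<subseteq> S} \<le> card {e\<in>E'. e \<subseteq> S'}"
        using less.prems(2) by (intro card_mono) (auto simp: E'_def)
      have "E' \<subseteq> E - {e0}" using e0 by (auto simp: E'_def)
      then have "card E' \<le> card (E - {e0})" using less.prems(2) by (intro card_mono) auto
      moreover have "card E > 0" using e0 less.prems(2) by (auto simp: card_gt_0_iff)
      moreover have "card (E - {e0}) = card E - 1" using e0 less.prems(2) by simp
      ultimately have cE: "card E' + 1 \<le> card E" by arith
      have "W = insert v (W' \<union> ({u} \<inter> W))" using vW u by (auto simp: W'_def)
      moreover have "v \<notin> W' \<union> ({u} \<inter> W)" using u by (auto simp: W'_def)
      moreover have "W' \<inter> ({u} \<inter> W) = {}" by (auto simp: W'_def)
      ultimately have cw2: "card W = card W' + A + 1" using less.prems(1)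
        by (metis A_def Suc_eq_plus1 card_Un_disjoint card_insert_disjoint finite_Int finite_Un finite_insert)
      show ?thesis by (rule exI[of _ S], rule ar2[OF a b S' cE A1 cw2])
    next
      case 3
      define E' where "E' = E - Ev"
      obtain S' where S': "3 * (card ((W - {v}) - S') + card {e\<in>E'. e \<subseteq> S'}) \<le> card (W - {v}) + card E'"
        using less.hyps[OF cW, of E'] less.prems by (auto simp: E'_def)
      define S where "S = S' - {v}"
      have "W - S \<subseteq> insert v ((W - {v}) - S')" by (auto simp: S_def)
      then have "card (W - S) \<le> card (insert v ((W - {v}) - S'))"
        using less.prems(1) by (intro card_mono) auto
      also have "\<dots> \<le> card ((W - {v}) - S') + 1" by (simp add: card_insert_le_m1 card_insert_if)
      finally have a: "card (W - S) \<le> card ((W - {v}) - S') + 1" .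
      have "{e\<in>E. e \<subseteq> S} \<subseteq> {e\<in>E'. e \<subseteq> S'}" by (auto simp: S_def E'_def Ev_def)
      then have b: "card {e\<in>E. e \<subseteq> S} \<le> card {e\<in>E'. e \<subseteq> S'}"
        using less.prems(2) by (intro card_mono) (auto simp: E'_def)
      have cE: "card E' + card Ev = card E" unfolding E'_def using EvE less.prems(2)
        by (metis card_Diff_subset finEv card_mono le_add_diff_inverse2)
      have cw1: "card (W - {v}) + 1 = card W" using vW less.prems(1) by (metis Suc_eq_plus1 card.remove)
      show ?thesis by (rule exI[of _ S], rule ar3[OF a b S' cE 3 cw1])
    qed
  qed
qed


lemma simple_size:
  assumes "\<And>e. count M e \<le> 1"
  shows "size M = card (set_mset M)"
proof -
  have "M = mset_set (set_mset M)"
  proof (rule multiset_eqI)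
    fix x
    show "count M x = count (mset_set (set_mset M)) x"
    proof (cases "x \<in># M")
      case True
      then have "count M x > 0" by simp
      then have "count M x = 1" using assms[of x] by linarith
      then show ?thesis using True by simp
    next
      case False
      then show ?thesis by (simp add: not_in_iff)
    qed
  qed
  then show ?thesis by (metis size_mset_set)
qed

lemma simple_filter_size:
  assumes "is_simple G"
  shows "size (filter_mset P G) = card {e\<in>set_mset G. P e}"
proof -
  have "\<And>e. count (filter_mset P G) e \<le> 1" using assms unfolding is_simple_def
    using count_filter_mset by (metis le0 order.trans)
  then show ?thesis by (simp add: simple_size)
qed

lemma size_keep_drop: "size G = size (keep S G) + size (filter_mset (drop_e S) G)"
proof -
  have "G = filter_mset (drop_e S) G + keep S G" unfolding keep_def by (rule multiset_partition)
  then show ?thesis by (metis add.commute size_union)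
qed

lemma simple_bound:
  fixes G :: "nat set multiset"
  assumes "is_simple G"
  shows "2 * size G \<le> 3 * ex G dumbbell"
proof -
  define W where "W = {v. {v} \<in># G}"
  define E where "E = {e\<in>set_mset G. card e = 2}"
  have inj: "inj (\<lambda>v::nat. {v})" by (auto simp: inj_on_def)
  have imW: "(\<lambda>v. {v}) ` W \<subseteq> set_mset G" by (auto simp: W_def)
  have finW: "finite W"
    by (rule finite_imageD[OF finite_subset[OF imW finite_set_mset]]) (use inj in \<open>auto simp: inj_on_def\<close>)
  have finE: "finite E" by (simp add: E_def)
  obtain S where S: "3 * (card (W - S) + card {e\<in>E. e \<subseteq> S}) \<le> card W + card E"
    using simple_core[OF finW finE] by (auto simp: E_def)
  have disj: "(\<lambda>v. {v}) ` W \<inter> E = {}" by (auto simp: E_def)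
  have "card W + card E = card ((\<lambda>v. {v}) ` W) + card E"
    using inj by (simp add: card_image inj_on_def)
  also have "\<dots> = card ((\<lambda>v. {v}) ` W \<union> E)"
    using disj finW finE by (simp add: card_Un_disjoint)
  also have "\<dots> \<le> card (set_mset G)" using imW by (intro card_mono) (auto simp: E_def)
  also have "\<dots> = size G" using assms unfolding is_simple_def by (simp add: simple_size)
  finally have WE: "card W + card E \<le> size G" .
  have "{e\<in>set_mset G. drop_e S e} \<subseteq> (\<lambda>v. {v}) ` (W - S) \<union> {e\<in>E. e \<subseteq> S}"
  proof
    fix e assume e: "e \<in> {e\<in>set_mset G. drop_e S e}"
    then consider "card e = 1" "\<not> e \<subseteq> S" | "card e = 2" "e \<subseteq> S"
      unfolding drop_e_def by blast
    then show "e \<in> (\<lambda>v. {v}) ` (W - S) \<union> {e\<in>E. e \<subseteq> S}"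
    proof cases
      case 1
      then obtain v where "e = {v}" by (auto simp: card_Suc_eq)
      then show ?thesis using 1 e by (auto simp: W_def)
    next
      case 2
      then show ?thesis using e by (auto simp: E_def)
    qed
  qed
  then have "card {e\<in>set_mset G. drop_e S e} \<le> card ((\<lambda>v. {v}) ` (W - S) \<union> {e\<in>E. e \<subseteq> S})"
    using finW finE by (intro card_mono) auto
  also have "\<dots> \<le> card ((\<lambda>v. {v}) ` (W - S)) + card {e\<in>E. e \<subseteq> S}" by (rule card_Un_le)
  also have "\<dots> \<le> card (W - S) + card {e\<in>E. e \<subseteq> S}" by (simp add: card_image_le finW)
  finally have c: "size (filter_mset (drop_e S) G) \<le> card (W - S) + card {e\<in>E. e \<subseteq> S}"
    using simple_filter_size[OF assms] by simp
  have "size G = size (keep S G) + size (filter_mset (drop_e S) G)" by (rule size_keep_drop)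
  moreover have "size (keep S G) \<le> ex G dumbbell" by (rule ex_ge_keep)
  ultimately show ?thesis using c S WE by arith
qed




lemma weight_sum:
  fixes p :: real
  assumes "finite V" "A \<subseteq> V"
  shows "(\<Sum>X\<in>Pow V. if A \<subseteq> X then p ^ card X * (1-p) ^ card (V - X) else 0) = p ^ card A"
proof -
  define f2 where "f2 = (\<lambda>x. if x \<in> A then 0 else 1 - p)"
  have "(\<Prod>x\<in>V. p + f2 x) = (\<Sum>X\<in>Pow V. (\<Prod>x\<in>X. p) * (\<Prod>x\<in>V-X. f2 x))"
    by (rule prod_add[OF assms(1)])
  also have "\<dots> = (\<Sum>X\<in>Pow V. if A \<subseteq> X then p ^ card X * (1-p) ^ card (V - X) else 0)"
  proof (rule sum.cong[OF refl])
    fix X assume X: "X \<in> Pow V"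
    show "(\<Prod>x\<in>X. p) * (\<Prod>x\<in>V-X. f2 x) = (if A \<subseteq> X then p ^ card X * (1-p) ^ card (V - X) else 0)"
    proof (cases "A \<subseteq> X")
      case True
      then have "(\<Prod>x\<in>V-X. f2 x) = (\<Prod>x\<in>V-X. 1 - p)" by (intro prod.cong) (auto simp: f2_def)
      then show ?thesis using True by simp
    next
      case False
      then obtain a where a: "a \<in> A" "a \<notin> X" by blast
      then have "a \<in> V - X" using assms(2) by auto
      moreover have "f2 a = 0" using a by (simp add: f2_def)
      ultimately have "(\<Prod>x\<in>V-X. f2 x) = 0" using assms(1) by (meson finite_Diff prod_zero)
      then show ?thesis using False by simp
    qed
  qed
  finally have eq: "(\<Prod>x\<in>V. p + f2 x) = (\<Sum>X\<in>Pow V. if A \<subseteq> X then p ^ card X * (1-p) ^ card (V - X) else 0)" .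
  have "(\<Prod>x\<in>V. p + f2 x) = (\<Prod>x\<in>V. if x \<in> A then p else 1)" by (intro prod.cong) (auto simp: f2_def)
  also have "\<dots> = (\<Prod>x\<in>V \<inter> A. p)" using assms(1) by (simp add: prod.If_cases)
  also have "\<dots> = p ^ card A" using assms(2) by (simp add: Int_absorb1)
  finally show ?thesis using eq by simp
qed

definition wt :: "real \<Rightarrow> nat set \<Rightarrow> nat set \<Rightarrow> real" where
  "wt p V X = p ^ card X * (1-p) ^ card (V - X)"

lemma wt_total: "finite V \<Longrightarrow> (\<Sum>X\<in>Pow V. wt p V X) = 1"
  using weight_sum[of V "{}" p] by (simp add: wt_def)

lemma wt_sub: "finite V \<Longrightarrow> A \<subseteq> V \<Longrightarrow> (\<Sum>X\<in>Pow V. if A \<subseteq> X then wt p V X else 0) = p ^ card A"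
  unfolding wt_def using weight_sum[of V A p] by simp

lemma edge_avg:
  assumes "finite V" "card e = 1 \<or> card e = 2 \<longrightarrow> e \<subseteq> V"
  shows "(\<Sum>X\<in>Pow V. wt p V X * (if drop_e X e then 1 else 0)) =
     (if card e = 1 then 1 - p else if card e = 2 then p^2 else 0)"
proof -
  consider "card e = 1" | "card e = 2" | "card e \<noteq> 1" "card e \<noteq> 2" by blast
  then show ?thesis
  proof cases
    case 1
    have "(\<Sum>X\<in>Pow V. wt p V X * (if drop_e X e then 1 else 0)) =
        (\<Sum>X\<in>Pow V. wt p V X - (if e \<subseteq> X then wt p V X else 0))"
      using 1 by (intro sum.cong) (auto simp: drop_e_def)
    also have "\<dots> = 1 - p ^ card e"
      using wt_total[OF assms(1)] wt_sub[OF assms(1), of e p] assms(2) 1 by (simp add: sum_subtractf)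
    finally show ?thesis using 1 by simp
  next
    case 2
    have "(\<Sum>X\<in>Pow V. wt p V X * (if drop_e X e then 1 else 0)) =
        (\<Sum>X\<in>Pow V. (if e \<subseteq> X then wt p V X else 0))"
      using 2 by (intro sum.cong) (auto simp: drop_e_def)
    also have "\<dots> = p ^ card e"
      using wt_sub[OF assms(1), of e p] assms(2) 2 by simp
    finally show ?thesis using 2 by simp
  next
    case 3
    then show ?thesis by (simp add: drop_e_def)
  qed
qed

lemma graph_avg:
  assumes "finite V" "\<forall>e\<in>#G. card e = 1 \<or> card e = 2 \<longrightarrow> e \<subseteq> V"
  shows "(\<Sum>X\<in>Pow V. wt p V X * real (size (filter_mset (drop_e X) G))) =
     (1 - p) * real (size (filter_mset (\<lambda>e. card e = 1) G)) + p^2 * real (size (filter_mset (\<lambda>e. card e = 2) G))"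
  using assms(2)
proof (induction G)
  case empty
  then show ?case by simp
next
  case (add e G)
  have "(\<Sum>X\<in>Pow V. wt p V X * real (size (filter_mset (drop_e X) (add_mset e G)))) =
     (\<Sum>X\<in>Pow V. wt p V X * real (size (filter_mset (drop_e X) G)) + wt p V X * (if drop_e X e then 1 else 0))"
    by (intro sum.cong) (auto simp: algebra_simps)
  also have "\<dots> = (\<Sum>X\<in>Pow V. wt p V X * real (size (filter_mset (drop_e X) G))) +
       (\<Sum>X\<in>Pow V. wt p V X * (if drop_e X e then 1 else 0))"
    by (rule sum.distrib)
  also have "\<dots> = (1 - p) * real (size (filter_mset (\<lambda>e. card e = 1) G)) + p^2 * real (size (filter_mset (\<lambda>e. card e = 2) G))
      + (if card e = 1 then 1 - p else if card e = 2 then p^2 else 0)"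
    using add edge_avg[OF assms(1), of e p] by simp
  finally show ?case by (auto simp: algebra_simps)
qed




lemma below_avg:
  assumes "finite V" "0 \<le> p" "p \<le> 1"
  shows "\<exists>X. (f X :: real) \<le> (\<Sum>X\<in>Pow V. wt p V X * f X)"
proof -
  have fin: "finite (f ` Pow V)" using assms(1) by simp
  have ne: "f ` Pow V \<noteq> {}" by auto
  obtain X0 where X0: "X0 \<in> Pow V" "f X0 = Min (f ` Pow V)" using Min_in[OF fin ne] by auto
  have "(\<Sum>X\<in>Pow V. wt p V X * f X0) \<le> (\<Sum>X\<in>Pow V. wt p V X * f X)"
  proof (rule sum_mono)
    fix X assume X: "X \<in> Pow V"
    have "f X0 \<le> f X" using X0 X fin by simp
    moreover have "wt p V X \<ge> 0" using assms by (simp add: wt_def)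
    ultimately show "wt p V X * f X0 \<le> wt p V X * f X" by (simp add: mult_left_mono)
  qed
  moreover have "(\<Sum>X\<in>Pow V. wt p V X * f X0) = f X0"
    using wt_total[OF assms(1), of p] by (simp add: sum_distrib_right[symmetric])
  ultimately show ?thesis by auto
qed

lemma sqrt5_bounds: "2 \<le> sqrt (5::real)" "sqrt (5::real) \<le> 9/4"
proof -
  have "sqrt (4::real) \<le> sqrt 5" by (rule real_sqrt_le_mono) simp
  then show "2 \<le> sqrt (5::real)" by simp
  have "sqrt (5::real) \<le> sqrt (81/16)" by (rule real_sqrt_le_mono) simp
  also have "sqrt (81/16::real) = 9/4" by (simp add: real_sqrt_divide)
  finally show "sqrt (5::real) \<le> 9/4" .
qed

lemma choose_p:
  fixes L M :: real
  assumes "0 \<le> L" "0 \<le> M"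
  shows "\<exists>p. 0 \<le> p \<and> p \<le> 1 \<and> (1-p)*L + p^2*M \<le> (L+M) * ((3 - sqrt 5)/2)"
proof (cases "2*M \<le> L")
  case True
  have "M \<le> (L+M) / 3" using True by simp
  also have "\<dots> = (L+M) * (1/3)" by simp
  also have "\<dots> \<le> (L+M) * ((3 - sqrt 5)/2)" using sqrt5_bounds assms
    by (intro mult_left_mono) auto
  finally show ?thesis by (intro exI[of _ 1]) simp
next
  case False
  then have M0: "M > 0" using assms by simp
  define s where "s = sqrt (5::real)"
  have s2: "s * s = 5" by (simp add: s_def)
  define p where "p = L / (2*M)"
  have p01: "0 \<le> p" "p \<le> 1" using False assms M0 by (auto simp: p_def field_simps)
  have lhs: "(1-p)*L + p^2*M = L - L^2 / (4*M)" using M0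
    by (simp add: p_def field_simps power2_eq_square)
  have iden: "(L+M) * (3 - s) * (2*M) - (4*M*L - L^2) = (L - (s-1)*M)^2"
    using s2 by (simp add: power2_eq_square algebra_simps)
  have "4*M*L - L^2 \<le> (L+M) * (3 - s) * (2*M)" using iden
    by (metis diff_ge_0_iff_ge zero_le_power2)
  then have "4*M*L - L^2 \<le> (L+M) * ((3 - s)/2) * (4*M)" by (simp add: algebra_simps)
  then have "L - L^2 / (4*M) \<le> (L+M) * ((3 - s)/2)" using M0
    by (simp add: field_simps)
  then show ?thesis using p01 lhs by (intro exI[of _ p]) (simp add: s_def)
qed

lemma filter_disj_size:
  assumes "\<And>e. \<not> (P e \<and> Q e)"
  shows "size (filter_mset P G) + size (filter_mset Q G) \<le> size G"
proof (induction G)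
  case empty
  then show ?case by simp
next
  case (add x G)
  then show ?case using assms[of x] by auto
qed

lemma multi_bound:
  fixes G :: "nat set multiset"
  assumes "is_mhg G"
  shows "real (size G) * ((sqrt 5 - 1)/2) \<le> real (ex G dumbbell)"
proof -
  define V where "V = \<Union> (set_mset G)"
  have finV: "finite V" using assms by (auto simp: V_def is_mhg_def)
  have sub: "\<forall>e\<in>#G. card e = 1 \<or> card e = 2 \<longrightarrow> e \<subseteq> V" by (auto simp: V_def)
  define L where "L = size (filter_mset (\<lambda>e. card e = 1) G)"
  define M where "M = size (filter_mset (\<lambda>e. card e = 2) G)"
  have LM: "L + M \<le> size G" unfolding L_def M_def by (rule filter_disj_size) auto
  obtain p where p: "0 \<le> p" "p \<le> 1" "(1-p)*real L + p^2*real M \<le> (real L + real M) * ((3 - sqrt 5)/2)"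
    using choose_p[of "real L" "real M"] by auto
  obtain X where X: "real (size (filter_mset (drop_e X) G)) \<le>
      (\<Sum>X\<in>Pow V. wt p V X * real (size (filter_mset (drop_e X) G)))"
    using below_avg[OF finV p(1,2), of "\<lambda>X. real (size (filter_mset (drop_e X) G))"] by blast
  also have "\<dots> = (1-p)*real L + p^2*real M"
    unfolding L_def M_def by (rule graph_avg[OF finV sub])
  also have "\<dots> \<le> (real L + real M) * ((3 - sqrt 5)/2)" by (rule p(3))
  also have "\<dots> \<le> real (size G) * ((3 - sqrt 5)/2)"
    using LM sqrt5_bounds by (intro mult_right_mono) auto
  finally have c: "real (size (filter_mset (drop_e X) G)) \<le> real (size G) * ((3 - sqrt 5)/2)" .
  have "size G = size (keep X G) + size (filter_mset (drop_e X) G)" by (rule size_keep_drop)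
  then have "real (size G) = real (size (keep X G)) + real (size (filter_mset (drop_e X) G))"
    by (metis of_nat_add)
  moreover have "size (keep X G) \<le> ex G dumbbell" by (rule ex_ge_keep)
  ultimately show ?thesis using c by (simp add: field_simps)
qed




lemma two_choose2: "2 * (n choose 2) = n * (n - 1)"
proof -
  have "even (n * (n - 1))" by auto
  then show ?thesis by (simp add: choose_two)
qed

lemma keep_plus: "keep S (A + B) = keep S A + keep S B"
  by (simp add: keep_def)

lemma keep_repeat: "keep S (repeat_mset c A) = repeat_mset c (keep S A)"
  by (induction c) (auto simp: keep_def)

fun dbs :: "nat \<Rightarrow> nat set multiset" where
  "dbs 0 = {#}"
| "dbs (Suc t) = dbs t + {#{2*t, 2*t+1}, {2*t}, {2*t+1}#}"

lemma size_dbs: "size (dbs t) = 3 * t"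
  by (induction t) auto

lemma dbs_sub0: "\<forall>e\<in>#dbs t. \<forall>x\<in>e. x < 2*t"
  by (induction t) fastforce+

lemma dbs_sub: "e \<in># dbs t \<Longrightarrow> e \<subseteq> {..<2*t}"
  using dbs_sub0 by blast

lemma dbs_simple: "count (dbs t) e \<le> 1"
proof (induction t)
  case 0
  then show ?case by simp
next
  case (Suc t)
  show ?case
  proof (cases "e \<in># {#{2*t, 2*t+1}, {2*t}, {2*t+1}#}")
    case True
    then have "e \<notin># dbs t" using dbs_sub[of e t] by auto
    then have "count (dbs t) e = 0" by (simp add: not_in_iff)
    moreover have "count {#{2*t, 2*t+1}, {2*t}, {2*t+1}#} e \<le> 1"
    proof -
      have d: "{2*t,2*t+1} \<noteq> {2*t}" "{2*t,2*t+1} \<noteq> {2*t+1}" "{2*t} \<noteq> {2*t+1::nat}"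
        by (auto simp: insert_eq_iff doubleton_eq_iff)
      from True consider "e = {2*t,2*t+1}" | "e = {2*t}" | "e = {2*t+1}" by auto
      then show ?thesis by cases (simp_all add: d d[symmetric])
    qed
    ultimately show ?thesis by (simp only: dbs.simps(2) count_union)
  next
    case False
    then have "count {#{2*t, 2*t+1}, {2*t}, {2*t+1}#} e = 0" using False by (simp add: not_in_iff) metis
    then show ?thesis using Suc by (simp only: dbs.simps(2) count_union)
  qed
qed

lemma keep_dbs: "size (keep S (dbs t)) \<le> 2 * t"
proof (induction t)
  case 0
  then show ?case by (simp add: keep_def)
next
  case (Suc t)
  have "size (keep S {#{2*t, 2*t+1}, {2*t}, {2*t+1}#}) \<le> 2"
    by (cases "2*t \<in> S"; cases "2*t+1 \<in> S") (auto simp: keep_def drop_e_def)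
  then show ?case using Suc by (simp only: dbs.simps(2) keep_plus size_union) arith
qed

definition Gs :: "nat \<Rightarrow> nat set multiset" where
  "Gs k = dbs ((k-1) div 2) + replicate_mset ((k-1) mod 2) {2 * ((k-1) div 2)}"

lemma Gs_props:
  assumes "k \<ge> 1"
  shows "is_mhg (Gs k)" "is_simple (Gs k)" "size (Gs k) = 3 * (k - 1) div 2" "ex (Gs k) dumbbell < k"
proof -
  define t where "t = (k-1) div 2"
  define r where "r = (k-1) mod 2"
  have G: "Gs k = dbs t + replicate_mset r {2*t}" by (simp add: Gs_def t_def r_def)
  have r1: "r \<le> 1" by (simp add: r_def)
  have "\<forall>e\<in>#dbs t. e \<noteq> {} \<and> finite e"
    by (induction t) auto
  then show "is_mhg (Gs k)" using G by (auto simp: is_mhg_def)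
  have "{2*t} \<notin># dbs t" using dbs_sub[of "{2*t}" t] by auto
  then have "count (dbs t) {2*t} = 0" by (simp add: not_in_iff)
  then show "is_simple (Gs k)" unfolding is_simple_def G using dbs_simple[of t] r1
    by (auto simp: count_replicate_mset)
  have "k - 1 = 2 * t + r" by (simp add: t_def r_def)
  then have "3 * (k - 1) = 2 * (3 * t + r) + r" by arith
  then have "3 * (k - 1) div 2 = 3 * t + r" using r1 by simp
  then show "size (Gs k) = 3 * (k - 1) div 2" by (simp add: G size_dbs)
  have "ex (Gs k) dumbbell \<le> 2 * t + r"
  proof (rule ex_le_keep)
    fix S
    have "size (keep S (replicate_mset r {2*t})) \<le> r"
      unfolding keep_def by (metis size_filter_mset_lesseq size_replicate_mset)
    then show "size (keep S (Gs k)) \<le> 2 * t + r" using keep_dbs[of S t] by (simp add: G keep_plus)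
  qed
  moreover have "2 * t + r = k - 1" by (simp add: t_def r_def)
  ultimately show "ex (Gs k) dumbbell < k" using assms by simp
qed




lemma xx1: "0 \<le> (x::int) * (x - 1)"
  by (cases "x \<le> 0") (auto intro: mult_nonpos_nonpos)

lemma key_ineq: "2 * j * s \<le> s*(s-1) + (j+1)*(j::nat)"
proof (cases s)
  case 0
  then show ?thesis by simp
next
  case (Suc s')
  have h: "0 \<le> (int s' + 1 - int j) * ((int s' + 1 - int j) - 1)" by (rule xx1)
  have "int (2 * j * s) \<le> int (s*(s-1) + (j+1)*j)"
    using h unfolding Suc by (simp add: algebra_simps)
  then show ?thesis by (simp only: of_nat_le_iff)
qed

lemma rep_mem: "x \<in># repeat_mset k M \<Longrightarrow> x \<in># M"
  by (metis count_greater_zero_iff count_repeat_mset mult_eq_0_iff neq0_conv)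

definition Km :: "nat \<Rightarrow> nat \<Rightarrow> nat \<Rightarrow> nat set multiset" where
  "Km c j n = repeat_mset (c*j) (image_mset (\<lambda>i. {i}) (mset_set {..<n}))
      + repeat_mset c (mset_set {e. e \<subseteq> {..<n} \<and> card e = 2})"

lemma finP2: "finite {e. e \<subseteq> {..<n::nat} \<and> card e = 2}"
  by (rule finite_subset[of _ "Pow {..<n}"]) auto

lemma cardP2: "card {e. e \<subseteq> {..<n::nat} \<and> card e = 2} = n choose 2"
  using n_subsets[of "{..<n}" 2] by simp

lemma Km_mhg: "is_mhg (Km c j n)"
  unfolding is_mhg_def Km_def using finP2[of n]
  by (auto dest!: rep_mem dest: finite_subset[OF _ finite_lessThan])

lemma Km_size: "size (Km c j n) = c * (j * n + (n choose 2))"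
  unfolding Km_def using finP2[of n] cardP2[of n] by (simp add: algebra_simps)

lemma Km_keep:
  "size (keep S (Km c j n)) \<le> c * ((n choose 2) + ((j+1) choose 2))"
proof -
  define s where "s = card (S \<inter> {..<n})"
  define P2 where "P2 = {e. e \<subseteq> {..<n::nat} \<and> card e = 2}"
  have fP2: "finite P2" using finP2 by (simp add: P2_def)
  have l: "keep S (image_mset (\<lambda>i. {i}) (mset_set {..<n})) =
      image_mset (\<lambda>i. {i}) (mset_set {i\<in>{..<n}. i \<in> S})"
    unfolding keep_def image_mset_filter_mset_swap[symmetric]
    by (simp add: drop_e_def)
  have "{i\<in>{..<n}. i \<in> S} = S \<inter> {..<n}" by auto
  then have ls: "size (keep S (image_mset (\<lambda>i. {i}) (mset_set {..<n}))) = s"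
    unfolding l s_def by simp
  have p: "keep S (mset_set P2) = mset_set {e\<in>P2. \<not> e \<subseteq> S}"
    unfolding keep_def using fP2 by (simp add: drop_e_def P2_def) auto
  have "P2 = {e\<in>P2. \<not> e \<subseteq> S} \<union> {e\<in>P2. e \<subseteq> S}" by auto
  then have "card P2 = card {e\<in>P2. \<not> e \<subseteq> S} + card {e\<in>P2. e \<subseteq> S}"
    using fP2 by (metis (no_types, lifting) card_Un_disjoint disjoint_iff finite_Un mem_Collect_eq)
  moreover have "{e\<in>P2. e \<subseteq> S} = {e. e \<subseteq> S \<inter> {..<n} \<and> card e = 2}" by (auto simp: P2_def)
  moreover have "card {e. e \<subseteq> S \<inter> {..<n} \<and> card e = 2} = s choose 2"
    unfolding s_def by (rule n_subsets) simp
  ultimately have ps: "size (keep S (mset_set P2)) + (s choose 2) = n choose 2"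
    using p fP2 cardP2[of n] by (simp add: P2_def)
  have "2 * j * s \<le> 2 * (s choose 2) + 2 * ((j+1) choose 2)"
    using key_ineq[of j s] two_choose2[of s] two_choose2[of "j+1"] by simp
  then have "j * s \<le> (s choose 2) + ((j+1) choose 2)" by simp
  then have "j * s + size (keep S (mset_set P2)) \<le> (n choose 2) + ((j+1) choose 2)"
    using ps by arith
  then have "c * (j * s + size (keep S (mset_set P2))) \<le> c * ((n choose 2) + ((j+1) choose 2))"
    by (rule mult_le_mono2)
  moreover have "size (keep S (Km c j n)) = c * (j * s + size (keep S (mset_set P2)))"
    unfolding Km_def keep_plus keep_repeat P2_def[symmetric] using ls by (simp add: algebra_simps)
  ultimately show ?thesis by simp
qed

lemma Km_ex: "ex (Km c j n) dumbbell \<le> c * ((n choose 2) + ((j+1) choose 2))"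
  by (rule ex_le_keep) (rule Km_keep)




definition phi :: real where "phi = (1 + sqrt 5) / 2"

lemma phi2: "phi * phi = phi + 1"
proof -
  have "sqrt 5 * sqrt 5 = (5::real)" by simp
  then show ?thesis unfolding phi_def by (simp add: algebra_simps)
qed

lemma phi_bounds: "3/2 \<le> phi" "phi \<le> 2"
  using sqrt5_bounds unfolding phi_def by auto

lemma multi_bound_phi:
  fixes G :: "nat set multiset"
  assumes "is_mhg G"
  shows "real (size G) \<le> phi * real (ex G dumbbell)"
proof -
  have "phi * ((sqrt 5 - 1)/2) = 1"
  proof -
    have "sqrt 5 * sqrt 5 = (5::real)" by simp
    then show ?thesis unfolding phi_def by (simp add: algebra_simps)
  qed
  moreover have "phi * (real (size G) * ((sqrt 5 - 1)/2)) \<le> phi * real (ex G dumbbell)"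
    using multi_bound[OF assms] phi_bounds by (intro mult_left_mono) auto
  ultimately show ?thesis by (metis mult.assoc mult.commute mult.left_neutral)
qed

lemma part1:
  assumes "k \<ge> 1"
  shows "EH dumbbell k = enat ((3 * (k - 1)) div 2)"
proof (rule antisym)
  show "EH dumbbell k \<le> enat ((3 * (k - 1)) div 2)"
    unfolding EH_def
  proof (rule Sup_least)
    fix z assume "z \<in> (\<lambda>G. enat (size G)) ` {G :: nat set multiset. is_mhg G \<and> is_simple G \<and> ex G dumbbell < k}"
    then obtain G :: "nat set multiset" where G: "is_simple G" "ex G dumbbell < k" "z = enat (size G)" by auto
    have "2 * size G \<le> 3 * ex G dumbbell" by (rule simple_bound[OF G(1)])
    then have "2 * size G \<le> 3 * (k - 1)" using G(2) by arith
    then have "size G \<le> (3 * (k - 1)) div 2" by presburger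
    then show "z \<le> enat ((3 * (k - 1)) div 2)" using G(3) by simp
  qed
  show "enat ((3 * (k - 1)) div 2) \<le> EH dumbbell k"
    unfolding EH_def using Gs_props[OF assms]
    by (intro Sup_upper) (auto intro!: image_eqI[of _ _ "Gs k"])
qed

lemma EHstar_upper:
  assumes "k \<ge> 1"
  shows "EHstar dumbbell k \<noteq> \<infinity> \<and> real (the_enat (EHstar dumbbell k)) \<le> phi * (real k - 1)"
proof -
  define B where "B = nat \<lfloor>phi * (real k - 1)\<rfloor>"
  have "EHstar dumbbell k \<le> enat B"
    unfolding EHstar_def
  proof (rule Sup_least)
    fix z assume "z \<in> (\<lambda>G. enat (size G)) ` {G :: nat set multiset. is_mhg G \<and> ex G dumbbell < k}"
    then obtain G :: "nat set multiset" where G: "is_mhg G" "ex G dumbbell < k" "z = enat (size G)" by auto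
    have "real (ex G dumbbell) \<le> real k - 1" using G(2) assms by linarith
    then have "phi * real (ex G dumbbell) \<le> phi * (real k - 1)"
      using phi_bounds by (intro mult_left_mono) auto
    then have "real (size G) \<le> phi * (real k - 1)" using multi_bound_phi[OF G(1)] by linarith
    then have "size G \<le> B" unfolding B_def by linarith
    then show "z \<le> enat B" using G(3) by simp
  qed
  then obtain N where N: "EHstar dumbbell k = enat N" "N \<le> B" by (metis enat_ile enat_ord_simps(1))
  have a0: "0 \<le> phi * (real k - 1)" using assms phi_bounds by simp
  have "real N \<le> real B" using N(2) by simp
  also have "\<dots> = of_int \<lfloor>phi * (real k - 1)\<rfloor>" unfolding B_def using a0 by simp
  also have "\<dots> \<le> phi * (real k - 1)" by simp
  finally have "real N \<le> phi * (real k - 1)" .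
  then show ?thesis using N by simp
qed




lemma final_real:
  fixes k c x y N r ph :: real
  assumes k: "k > 0" and c: "c \<ge> (k-1)/x - 1" and x: "x > 0" and y: "y \<ge> 0"
    and N1: "N \<ge> c*y" and N2: "N \<le> ph*(k-1)" and ratio: "y/x \<ge> ph - r/3"
    and K: "k > 3*y*(1+x)/(x*r)" and r: "r > 0" and ph: "ph \<ge> 0"
  shows "\<bar>N/k - ph\<bar> < r"
proof -
  have "N \<ge> ((k-1)/x - 1) * y" using c y N1 by (meson mult_right_mono order.trans)
  also have "((k-1)/x - 1) * y = k * (y/x) - y*(1+x)/x" using x by (simp add: field_simps)
  finally have "N/k \<ge> (k * (y/x) - y*(1+x)/x)/k" using k by (simp add: divide_right_mono)
  also have "(k * (y/x) - y*(1+x)/x)/k = y/x - y*(1+x)/(x*k)" using k x by (simp add: field_simps)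
  finally have N3: "N/k \<ge> y/x - y*(1+x)/(x*k)" .
  have "3*y*(1+x) < k * (x*r)" using K x r by (simp add: field_simps)
  then have "y*(1+x)/(x*k) < r/3" using x k by (simp add: field_simps)
  then have low: "N/k > ph - r" using N3 ratio r by linarith
  have "N/k \<le> ph*(k-1)/k" using N2 k by (simp add: divide_right_mono)
  also have "\<dots> \<le> ph" using k ph by (simp add: field_simps)
  finally show ?thesis using low r by linarith
qed

lemma choose2_real: "real (n choose 2) * 2 = real n * real n - real n"
proof -
  have "2 * (n choose 2) = n * (n - 1)" by (rule two_choose2)
  then have "real (2 * (n choose 2)) = real (n * (n - 1))" by simp
  then show ?thesis by (cases n) (auto simp: algebra_simps)
qed

lemma ratio_bound:
  assumes j: "j \<ge> 1" and n: "n = nat \<lfloor>phi * real j\<rfloor>"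
  defines "x \<equiv> (n choose 2) + ((j+1) choose 2)"
  defines "y \<equiv> j * n + (n choose 2)"
  shows "real x > 0" "phi - 3 / real j \<le> real y / real x"
proof -
  define N J where "N = real n" and "J = real j"
  have J1: "J \<ge> 1" using j by (simp add: J_def)
  have a0: "phi * J \<ge> 0" using phi_bounds J1 by simp
  have e: "N = of_int \<lfloor>phi * J\<rfloor>" unfolding N_def n J_def using a0 J_def by simp
  have fl: "N \<le> phi * J" "phi * J - 1 < N" "N \<ge> 0" unfolding e
    using of_int_floor_le[of "phi*J"] real_of_int_floor_add_one_gt[of "phi*J"] a0 by auto
  have x2: "2 * real x = N*N - N + (J+1)*J"
    using choose2_real[of n] choose2_real[of "j+1"] unfolding x_def N_def J_def by (simp add: algebra_simps)
  have y2: "2 * real y = 2*J*N + N*N - N"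
    using choose2_real[of n] unfolding y_def N_def J_def by (simp add: algebra_simps)
  have nn: "N*N - N \<ge> 0" using choose2_real[of n] unfolding N_def by (metis of_nat_0_le_iff mult_nonneg_nonneg zero_le_numeral)
  have X: "2 * real x \<ge> J*J" using x2 nn J1 by (simp add: algebra_simps)
  moreover have "J*J \<ge> 1" using J1 mult_mono[of 1 J 1 J] by simp
  ultimately show xpos: "real x > 0" by simp
  have iden: "phi * (2 * real x) - 2 * real y = (phi - 1)*(N - phi*J)^2 + (1 - phi)*N + phi*J"
    using phi2 x2 y2 unfolding power2_eq_square by algebra
  have sq: "(N - phi*J)^2 \<le> 1"
  proof -
    have "\<bar>N - phi*J\<bar> \<le> 1" using fl by auto
    then have "\<bar>N - phi*J\<bar>^2 \<le> 1^2" by (intro power_mono) auto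
    then show ?thesis by simp
  qed
  have a1: "(phi - 1)*(N - phi*J)^2 \<le> phi - 1" using mult_left_mono[OF sq, of "phi-1"] phi_bounds by simp
  have a2: "(1 - phi)*N \<le> 0" using phi_bounds fl(3) by (simp add: mult_nonpos_nonneg)
  have a3: "phi*J \<le> 2*J" using phi_bounds J1 by (intro mult_right_mono) auto
  have gen: "\<And>A B C. A \<le> phi - 1 \<Longrightarrow> B \<le> 0 \<Longrightarrow> C \<le> 2*J \<Longrightarrow> A + B + C \<le> 3*J"
    using phi_bounds J1 by linarith
  have b: "phi * (2 * real x) - 2 * real y \<le> 3 * J" unfolding iden by (rule gen[OF a1 a2 a3])
  have "phi - real y / real x = (phi * (2 * real x) - 2 * real y) / (2 * real x)"
    using xpos by (simp add: field_simps)
  also have "\<dots> \<le> 3*J / (2 * real x)" using b xpos by (intro divide_right_mono) auto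
  also have "\<dots> \<le> 3*J / (J*J)" using X J1 xpos by (intro divide_left_mono) auto
  also have "\<dots> = 3 / J" using J1 by (simp add: field_simps)
  finally show "phi - 3 / real j \<le> real y / real x" unfolding J_def by simp
qed




lemma EHstar_lower:
  assumes k: "k \<ge> 1" and j: "j \<ge> 1"
  shows "real ((k - 1) div ((n choose 2) + ((j+1) choose 2)) * (j * n + (n choose 2)))
           \<le> real (the_enat (EHstar dumbbell k))"
proof -
  define x where "x = (n choose 2) + ((j+1) choose 2)"
  define c where "c = (k - 1) div x"
  have "c * x + (k - 1) mod x = k - 1" unfolding c_def by (rule div_mult_mod_eq)
  then have cx: "c * x \<le> k - 1" by arith
  have exk: "ex (Km c j n) dumbbell < k" using Km_ex[of c j n] cx k unfolding x_def by arith
  obtain N where N: "EHstar dumbbell k = enat N"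
    using EHstar_upper[OF k] by (cases "EHstar dumbbell k") auto
  have "enat (size (Km c j n)) \<le> EHstar dumbbell k"
    unfolding EHstar_def using Km_mhg[of c j n] exk
    by (intro Sup_upper) (auto intro!: image_eqI[of _ _ "Km c j n"])
  then have "size (Km c j n) \<le> N" using N by simp
  then have "real (size (Km c j n)) \<le> real N" by (simp only: of_nat_le_iff)
  then show ?thesis using N unfolding Km_size c_def x_def by simp
qed

lemma div_low:
  assumes "x > 0"
  shows "real (m div x) \<ge> real m / real x - 1"
proof -
  have "m div x * x + m mod x = m" by (rule div_mult_mod_eq)
  then have "real m = real (m div x) * real x + real (m mod x)" by (metis of_nat_add of_nat_mult)
  moreover have "real (m mod x) < real x" using assms by simp
  ultimately have "real m < (real (m div x) + 1) * real x" by (simp add: algebra_simps)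
  then have "real m / real x < real (m div x) + 1" using assms by (simp add: field_simps)
  then show ?thesis by simp
qed

lemma part3:
  "(\<lambda>k. real (the_enat (EHstar dumbbell k)) / real k) \<longlonglongrightarrow> phi"
proof (rule LIMSEQ_I)
  fix r :: real assume r: "r > 0"
  define j where "j = nat \<lceil>9/r\<rceil> + 1"
  have j1: "j \<ge> 1" by (simp add: j_def)
  have "real j \<ge> 9/r" unfolding j_def by linarith
  then have "9 \<le> r * real j" using r by (simp add: field_simps)
  then have jr: "3 / real j \<le> r/3" using j1 by (simp add: field_simps)
  define n where "n = nat \<lfloor>phi * real j\<rfloor>"
  define x where "x = (n choose 2) + ((j+1) choose 2)"
  define y where "y = j * n + (n choose 2)"
  have xpos: "real x > 0" and rat0: "phi - 3 / real j \<le> real y / real x"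
    using ratio_bound[OF j1 n_def] unfolding x_def y_def by auto
  have rat: "real y / real x \<ge> phi - r/3" using rat0 jr by linarith
  define K where "K = nat \<lceil>3 * real y * (1 + real x) / (real x * r)\<rceil> + 1"
  show "\<exists>no. \<forall>k\<ge>no. norm (real (the_enat (EHstar dumbbell k)) / real k - phi) < r"
  proof (intro exI allI impI)
    fix k assume kK: "k \<ge> K"
    then have k1: "k \<ge> 1" by (simp add: K_def)
    have kb: "real k > 3 * real y * (1 + real x) / (real x * r)"
    proof -
      have "real K > 3 * real y * (1 + real x) / (real x * r)" unfolding K_def by linarith
      then show ?thesis using kK by linarith
    qed
    define c where "c = (k - 1) div x"
    have cb: "real c \<ge> (real k - 1) / real x - 1"
      using div_low[of x "k-1"] xpos k1 unfolding c_def by (simp add: of_nat_diff)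
    have N1: "real c * real y \<le> real (the_enat (EHstar dumbbell k))"
      using EHstar_lower[OF k1 j1, of n] unfolding c_def x_def y_def by simp
    have N2: "real (the_enat (EHstar dumbbell k)) \<le> phi * (real k - 1)"
      using EHstar_upper[OF k1] by simp
    have "\<bar>real (the_enat (EHstar dumbbell k)) / real k - phi\<bar> < r"
      by (rule final_real[OF _ cb xpos _ N1 N2 rat kb r]) (use k1 phi_bounds in auto)
    then show "norm (real (the_enat (EHstar dumbbell k)) / real k - phi) < r" by simp
  qed
qed

theorem theorem1p5:
  shows "(\<forall>k::nat. k \<ge> 1 \<longrightarrow> EH dumbbell k = enat ((3 * (k - 1)) div 2))
       \<and> (\<forall>\<^sub>F k in sequentially. EHstar dumbbell k \<noteq> \<infinity>)
       \<and> ((\<lambda>k. real (the_enat (EHstar dumbbell k)) / real k)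
            \<longlonglongrightarrow> (1 + sqrt 5) / 2)"
proof (intro conjI)
  show "\<forall>k::nat. k \<ge> 1 \<longrightarrow> EH dumbbell k = enat ((3 * (k - 1)) div 2)" using part1 by blast
  show "\<forall>\<^sub>F k in sequentially. EHstar dumbbell k \<noteq> \<infinity>"
    unfolding eventually_sequentially using EHstar_upper by blast
  show "(\<lambda>k. real (the_enat (EHstar dumbbell k)) / real k) \<longlonglongrightarrow> (1 + sqrt 5) / 2"
    using part3 unfolding phi_def .
qed


end
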